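(* Let $n$ be a positive integer and let $G$ be a pure $(2n)$-sparse gapset of genus $g=3n+1$ with multiplicity $m$. If $G$ is symmetric, then $m=2n$.
   Context: A gapset is a finite set $G\subset\mathbb{N}=\{1,2,\dots\}$ such that whenever $z\in G$ and $z=x+y$ with $x,y\in\mathbb{N}$, then $x\in G$ or $y\in G$; its genus is $g=\#G$. Writing $G=\{\ell_1<\dots<\ell_g\}$, multiplicity $m(G)=\min\{s\in\mathbb{N}:s\notin G\}$, Frobenius number $F(G)=\ell_g$; $G$ is symmetric if $F(G)=2g-1$. $G$ is pure $\kappa$-sparse if $\ell_{i+1}-\ell_i\le\kappa$ for all $i$ with equality for some $i$. *)

theory Defs
  imports Main
begin

definition gapset :: "nat set \<Rightarrow> bool" where
  "gapset G \<longleftrightarrow> finite G \<and> 0 \<notin> G \<and>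
     (\<forall>z \<in> G. \<forall>x y. x \<ge> 1 \<and> y \<ge> 1 \<and> z = x + y \<longrightarrow> x \<in> G \<or> y \<in> G)"

definition genus :: "nat set \<Rightarrow> nat" where
  "genus G = card G"

definition multiplicity :: "nat set \<Rightarrow> nat" where
  "multiplicity G = (LEAST s. s \<ge> 1 \<and> s \<notin> G)"

definition frobenius :: "nat set \<Rightarrow> nat" where
  "frobenius G = Max G"

definition symmetric_gapset :: "nat set \<Rightarrow> bool" where
  "symmetric_gapset G \<longleftrightarrow> frobenius G = 2 * genus G - 1"

definition consecutive :: "nat set \<Rightarrow> nat \<Rightarrow> nat \<Rightarrow> bool" where
  "consecutive G a b \<longleftrightarrow> a \<in> G \<and> b \<in> G \<and> a < b \<and> (\<forall>c. a < c \<and> c < b \<longrightarrow> c \<notin> G)"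

definition pure_sparse :: "nat \<Rightarrow> nat set \<Rightarrow> bool" where
  "pure_sparse \<kappa> G \<longleftrightarrow>
     (\<forall>a b. consecutive G a b \<longrightarrow> b - a \<le> \<kappa>) \<and>
     (\<exists>a b. consecutive G a b \<and> b - a = \<kappa>)"

end

theory Submission
  imports Defs
begin

theorem mainTheorem11:
  fixes n :: nat and G :: "nat set"
  assumes "n \<ge> 1"
    and "gapset G"
    and "pure_sparse (2 * n) G"
    and "genus G = 3 * n + 1"
    and "symmetric_gapset G"
  shows "multiplicity G = 2 * n"
proof -
  have fin: "finite G" and z: "0 \<notin> G"
    and gp: "\<And>z x y. z \<in> G \<Longrightarrow> x \<ge> 1 \<Longrightarrow> y \<ge> 1 \<Longrightarrow> z = x + y \<Longrightarrow> x \<in> G \<or> y \<in> G"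
    using assms(2) unfolding gapset_def by blast+
  have cardG: "card G = 3*n+1" using assms(4) genus_def by simp
  then have ne: "G \<noteq> {}" by auto
  define F where "F = Max G"
  have FG: "F \<in> G" using fin ne F_def by simp
  have Fmax: "\<And>x. x \<in> G \<Longrightarrow> x \<le> F" using fin F_def by simp
  have Fv: "F = 6*n+1" using assms(5) cardG F_def unfolding symmetric_gapset_def frobenius_def genus_def by simp
  define m where "m = multiplicity G"
  have ex: "Suc F \<ge> 1 \<and> Suc F \<notin> G" using Fmax by force
  have m1: "m \<ge> 1 \<and> m \<notin> G" unfolding m_def multiplicity_def by (rule LeastI[of "\<lambda>s. s \<ge> 1 \<and> s \<notin> G", OF ex])
  have mlow: "\<And>s. 1 \<le> s \<Longrightarrow> s < m \<Longrightarrow> s \<in> G"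
    unfolding m_def multiplicity_def using not_less_Least by blast
  have "{1..<m} \<subseteq> G" using mlow by auto
  then have "card {1..<m} \<le> card G" using fin card_mono by blast
  then have mF: "m \<le> F" using cardG Fv assms(1) by simp
  define A where "A = {x. x \<le> F \<and> x \<notin> G}"
  have GF: "G \<subseteq> {..F}" using Fmax by auto
  have un: "{..F} = A \<union> G" using GF A_def by auto
  have "card {..F} = card A + card G"
    unfolding un by (rule card_Un_disjoint) (auto simp: A_def fin)
  then have cA: "card A = card G" using Fv cardG by simp
  have inj: "inj_on (\<lambda>x. F - x) A" unfolding A_def inj_on_def by auto
  have sub: "(\<lambda>x. F - x) ` A \<subseteq> G"
  proof
    fix y assume "y \<in> (\<lambda>x. F - x) ` A"
    then obtain x where x: "x \<le> F" "x \<notin> G" "y = F - x" unfolding A_def by auto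
    show "y \<in> G"
    proof (rule ccontr)
      assume yn: "y \<notin> G"
      have "x \<noteq> 0" proof assume "x = 0" then show False using x(3) yn FG by simp qed
      moreover have "x \<noteq> F" using x FG by auto
      ultimately have "1 \<le> x" "1 \<le> y" "F = x + y" using x(1,3) by auto
      from gp[OF FG this] show False using x(2) yn by blast
    qed
  qed
  have img: "(\<lambda>x. F - x) ` A = G"
    using card_subset_eq[OF fin sub] card_image[OF inj] cA by simp
  have sym2: "\<And>y. y \<in> G \<Longrightarrow> F - y \<notin> G"
  proof -
    fix y assume "y \<in> G"
    then obtain x where "x \<in> A" "y = F - x" using img by blast
    then show "F - y \<notin> G" unfolding A_def by auto
  qed
  have Fm: "F - m \<in> G" using img m1 mF A_def by blast
  have cons: "consecutive G (F - m) F"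
    unfolding consecutive_def
  proof (intro conjI allI impI)
    show "F - m < F" using m1 mF by simp
    fix c assume c: "F - m < c \<and> c < F"
    have "F - c \<in> G" using mlow[of "F - c"] c mF by auto
    then have "F - (F - c) \<notin> G" by (rule sym2)
    then show "c \<notin> G" using c by simp
  qed (use Fm FG in auto)
  have "F - (F - m) \<le> 2*n" using assms(3) cons unfolding pure_sparse_def by blast
  then have le: "m \<le> 2*n" using mF by simp
  obtain a b where ab: "consecutive G a b" "b - a = 2*n" using assms(3) unfolding pure_sparse_def by blast
  have ge: "\<not> m < 2*n"
  proof
    assume "m < 2*n"
    moreover have "a < b" using ab(1) unfolding consecutive_def by blast
    ultimately have "a < b - m" "b - m < b" using ab(2) m1 by auto
    then have "b - m \<notin> G" using ab(1) unfolding consecutive_def by blast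
    moreover have "b - m \<ge> 1" using \<open>a < b - m\<close> by simp
    moreover have "b \<in> G" using ab(1) unfolding consecutive_def by blast
    ultimately show False using gp[of b "b - m" m] m1 \<open>b - m < b\<close> by auto
  qed
  show ?thesis using le ge m_def by simp
qed

end
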